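(* Let $0<t_0\le 1/\max_j|\bar c_j|$. Then for every $v\in\mathrm{W}^{2,p}_0([0,t_0],\mathbb{C}^m)$ the function $x:[0,t_0]\to X^i$ given by $x(t)=(P^i_+S_t-P^i_-R_t)v$, i.e. \[ x(t)(s)=P^i_+\bigl(\hat v_j(t-\tfrac{1-s}{|\bar c_j|})\bigr)_{j=1}^m-P^i_-\bigl(\hat v_j(t-\tfrac{s}{|\bar c_j|})\bigr)_{j=1}^m,\quad s\in[0,1], \] ($\hat v$ the extension of $v$ by $0$ to $\mathbb{R}$) is a classical solution of the boundary control system \[ \dot x(t)=A_m^i x(t),\quad L^i x(t)=v(t)\quad(0\le t\le t_0),\qquad x(0)=0. \]
   Context: Fix $p\in[1,\infty)$, $m\in\mathbb{N}$, $X^i=\mathrm{L}^p([0,1],\mathbb{C}^m)$. Let $\bar c_1,\dots,\bar c_m$ be nonzero real numbers, $\bar C=\operatorname{diag}(\bar c_1,\dots,\bar c_m)$, and $P^i_\pm$ the diagonal coordinate projections onto the coordinates $j$ with $\pm\bar c_j>0$. $A_m^i f=\bar C f'$ with $D(A_m^i)=\mathrm{W}^{1,p}([0,1],\mathbb{C}^m)$, and $L^i:D(A^i_m)\to\mathbb{C}^m$, $L^if=f(1)-f(0)$. A classical solution is a function $x\in\mathrm{C}^1([0,t_0],X^i)$ with $x(t)\in D(A^i_m)$ for all $t$, $t\mapsto A^i_mx(t)$ continuous, satisfying the stated equations. *)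

theory Defs
  imports "HOL-Analysis.Analysis"
begin

text \<open>An element of L^p(I, C^m) is represented by a (measurable) function; equality
  in L^p is equality a.e., i.e. vanishing of the L^p-norm of the difference.\<close>

definition in_Lp :: "real \<Rightarrow> real set \<Rightarrow> (real \<Rightarrow> complex^'m) \<Rightarrow> bool" where
  "in_Lp p I f \<longleftrightarrow> f \<in> borel_measurable (lebesgue_on I) \<and>
      integrable (lebesgue_on I) (\<lambda>s. norm (f s) powr p)"

definition Lp_norm :: "real \<Rightarrow> real set \<Rightarrow> (real \<Rightarrow> complex^'m) \<Rightarrow> real" where
  "Lp_norm p I f = (\<integral>s. norm (f s) powr p \<partial>(lebesgue_on I)) powr (1 / p)"

text \<open>w is the absolutely continuous representative of the L^p class f on [a,b],
  with (weak) derivative g in L^p: f is in W^{1,p}([a,b]) with f = w a.e. and w' = g.\<close>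

definition W1p_rep :: "real \<Rightarrow> real \<Rightarrow> real \<Rightarrow> (real \<Rightarrow> complex^'m) \<Rightarrow> (real \<Rightarrow> complex^'m)
    \<Rightarrow> (real \<Rightarrow> complex^'m) \<Rightarrow> bool" where
  "W1p_rep p a b f w g \<longleftrightarrow> in_Lp p {a..b} f \<and> in_Lp p {a..b} g \<and>
     (AE s in lebesgue_on {a..b}. w s = f s) \<and>
     (\<forall>s\<in>{a..b}. w s = w a + (LINT \<tau>:{a..s}|lebesgue. g \<tau>))"

text \<open>W^{2,p}_0([0,t0], C^m): v (its C^1 representative) with v' absolutely continuous,
  v'' in L^p, and v(0) = v'(0) = 0.\<close>

definition W2p0 :: "real \<Rightarrow> real \<Rightarrow> (real \<Rightarrow> complex^'m) \<Rightarrow> bool" where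
  "W2p0 p t0 v \<longleftrightarrow> (\<exists>v1 v2. in_Lp p {0..t0} v2 \<and> v 0 = 0 \<and> v1 0 = 0 \<and>
     (\<forall>s\<in>{0..t0}. v s = v 0 + (LINT \<tau>:{0..s}|lebesgue. v1 \<tau>)) \<and>
     (\<forall>s\<in>{0..t0}. v1 s = v1 0 + (LINT \<tau>:{0..s}|lebesgue. v2 \<tau>)))"

definition zext :: "real \<Rightarrow> (real \<Rightarrow> complex^'m) \<Rightarrow> real \<Rightarrow> complex^'m" where
  "zext t0 v \<tau> = (if 0 \<le> \<tau> \<and> \<tau> \<le> t0 then v \<tau> else 0)"

definition Cmul :: "('m \<Rightarrow> real) \<Rightarrow> complex^'m \<Rightarrow> complex^'m" where
  "Cmul c y = (\<chi> j. complex_of_real (c j) * y $ j)"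

text \<open>Classical solution on [0,t0] of  x' = A_m x,  L x = v,  x(0) = 0  in X = L^p([0,1],C^m),
  where A_m f = C f' on D(A_m) = W^{1,p}([0,1],C^m) and L f = f(1) - f(0).
  x' is the derivative of x in X (one-sided at the endpoints), w t / g t are the
  continuous representative of x t and its weak derivative (so A_m x(t) = C g t).\<close>

definition classical_solution :: "real \<Rightarrow> ('m \<Rightarrow> real) \<Rightarrow> real \<Rightarrow> (real \<Rightarrow> real \<Rightarrow> complex^'m)
    \<Rightarrow> (real \<Rightarrow> complex^'m) \<Rightarrow> bool" where
  "classical_solution p c t0 x v \<longleftrightarrow>
     (\<forall>t\<in>{0..t0}. in_Lp p {0..1} (x t)) \<and>
     (\<exists>x' w g.
        (\<forall>t\<in>{0..t0}. in_Lp p {0..1} (x' t)) \<and>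
        (\<forall>t\<in>{0..t0}. ((\<lambda>\<tau>. Lp_norm p {0..1} (\<lambda>s. (x \<tau> s - x t s) /\<^sub>R (\<tau> - t) - x' t s))
             \<longlongrightarrow> 0) (at t within {0..t0})) \<and>
        (\<forall>t\<in>{0..t0}. ((\<lambda>\<tau>. Lp_norm p {0..1} (\<lambda>s. x' \<tau> s - x' t s))
             \<longlongrightarrow> 0) (at t within {0..t0})) \<and>
        (\<forall>t\<in>{0..t0}. W1p_rep p 0 1 (x t) (w t) (g t)) \<and>
        (\<forall>t\<in>{0..t0}. ((\<lambda>\<tau>. Lp_norm p {0..1} (\<lambda>s. Cmul c (g \<tau> s) - Cmul c (g t s)))
             \<longlongrightarrow> 0) (at t within {0..t0})) \<and>
        (\<forall>t\<in>{0..t0}. Lp_norm p {0..1} (\<lambda>s. x' t s - Cmul c (g t s)) = 0) \<and>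
        (\<forall>t\<in>{0..t0}. w t 1 - w t 0 = v t) \<and>
        Lp_norm p {0..1} (x 0) = 0)"

end

theory Submission
  imports Defs
begin


lemma Lp_norm_nonneg: "Lp_norm p I f \<ge> 0"
  unfolding Lp_norm_def by simp

lemma Lp_bound:
  fixes f :: "real \<Rightarrow> complex^'m"
  assumes p: "p > 0" and e: "e \<ge> 0" and b: "\<And>s. s \<in> {0..1} \<Longrightarrow> norm (f s) \<le> e"
  shows "Lp_norm p {0..1} f \<le> e"
proof -
  have I: "(\<integral>s. norm (f s) powr p \<partial>(lebesgue_on {0..1})) \<le> e powr p"
  proof (cases "integrable (lebesgue_on {0..1}) (\<lambda>s. norm (f s) powr p)")
    case True
    have ic: "integrable (lebesgue_on {0..1}) (\<lambda>s::real. e powr p)"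
      by (rule continuous_imp_integrable_real) simp
    have "(\<integral>s. norm (f s) powr p \<partial>(lebesgue_on {0..1})) \<le> (\<integral>s. e powr p \<partial>(lebesgue_on {0..1::real}))"
      by (rule integral_mono[OF True ic]) (use b p in \<open>auto intro: powr_mono2\<close>)
    also have "\<dots> = e powr p" by (simp add: measure_restrict_space)
    finally show ?thesis .
  next
    case False
    then show ?thesis by (simp add: not_integrable_integral_eq)
  qed
  have "Lp_norm p {0..1} f \<le> (e powr p) powr (1/p)"
    unfolding Lp_norm_def
    by (rule powr_mono2) (use I p in auto)
  also have "\<dots> = e" using p e by (simp add: powr_powr)
  finally show ?thesis .
qed

lemma Lp_zero:
  fixes f :: "real \<Rightarrow> complex^'m"
  assumes p: "p > 0" and b: "\<And>s. s \<in> {0..1} \<Longrightarrow> f s = 0"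
  shows "Lp_norm p {0..1} f = 0"
  using Lp_bound[OF p order_refl, of f] b Lp_norm_nonneg[of p "{0..1}" f] by force

lemma Lp_tendsto:
  fixes F :: "'a \<Rightarrow> real \<Rightarrow> complex^'m"
  assumes p: "p > 0"
    and ev: "\<And>e. e > 0 \<Longrightarrow> eventually (\<lambda>\<tau>. \<forall>s\<in>{0..1}. norm (F \<tau> s) \<le> e) net"
  shows "((\<lambda>\<tau>. Lp_norm p {0..1} (F \<tau>)) \<longlongrightarrow> 0) net"
proof (rule tendstoI)
  fix e :: real assume e: "e > 0"
  show "eventually (\<lambda>\<tau>. dist (Lp_norm p {0..1} (F \<tau>)) 0 < e) net"
    using ev[of "e/2"] e
  proof -
    have "eventually (\<lambda>\<tau>. \<forall>s\<in>{0..1}. norm (F \<tau> s) \<le> e/2) net" using ev[of "e/2"] e by simp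
    then show ?thesis
  proof (rule eventually_mono)
    fix \<tau> assume "\<forall>s\<in>{0..1}. norm (F \<tau> s) \<le> e/2"
    then have "Lp_norm p {0..1} (F \<tau>) \<le> e/2" using e by (intro Lp_bound[OF p]) auto
    then show "dist (Lp_norm p {0..1} (F \<tau>)) 0 < e"
      using Lp_norm_nonneg[of p "{0..1}" "F \<tau>"] e by simp
  qed
  qed
qed

lemma Lp_cont:
  fixes f :: "real \<Rightarrow> complex^'m"
  assumes "continuous_on {0..1} f" and p: "p > 0"
  shows "in_Lp p {0..1} f"
  unfolding in_Lp_def
proof
  show "f \<in> borel_measurable (lebesgue_on {0..1})"
    using continuous_imp_integrable_real[OF assms(1)] by (rule borel_measurable_integrable)
  have "continuous_on {0..1} (\<lambda>s. norm (f s) powr p)"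
    by (intro continuous_on_powr' continuous_on_norm assms(1) continuous_on_const) (use p in auto)
  then show "integrable (lebesgue_on {0..1}) (\<lambda>s. norm (f s) powr p)"
    by (rule continuous_imp_integrable_real)
qed



lemma v2_props:
  fixes v2 :: "real \<Rightarrow> complex^'m"
  assumes p: "p \<ge> 1" and L: "in_Lp p {0..t0} v2"
  shows "v2 integrable_on {0..t0}"
    and "\<And>s. s \<in> {0..t0} \<Longrightarrow> (LINT \<tau>:{0..s}|lebesgue. v2 \<tau>) = integral {0..s} v2"
proof -
  have meas: "v2 \<in> borel_measurable (lebesgue_on {0..t0})"
    and ip: "integrable (lebesgue_on {0..t0}) (\<lambda>s. norm (v2 s) powr p)"
    using L unfolding in_Lp_def by auto
  have i1: "integrable (lebesgue_on {0..t0}) (\<lambda>s::real. 1::real)"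
    by (rule continuous_imp_integrable_real) simp
  have iI: "integrable (lebesgue_on {0..t0}) v2"
  proof (rule Bochner_Integration.integrable_bound[OF Bochner_Integration.integrable_add[OF i1 ip] meas])
    show "AE x in lebesgue_on {0..t0}. norm (v2 x) \<le> norm (1 + norm (v2 x) powr p)"
    proof (rule AE_I2)
      fix x
      have "norm (v2 x) \<le> 1 + norm (v2 x) powr p"
      proof (cases "norm (v2 x) \<le> 1")
        case True
        have "0 \<le> norm (v2 x) powr p" by simp
        then show ?thesis using True by linarith
      next
        case False
        then have "norm (v2 x) powr 1 \<le> norm (v2 x) powr p" using p by (intro powr_mono) auto
        then show ?thesis using False by simp
      qed
      then show "norm (v2 x) \<le> norm (1 + norm (v2 x) powr p)" by simp
    qed
  qed
  show "v2 integrable_on {0..t0}"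
    by (rule integrable_on_lebesgue_on[OF iI]) simp
  have si: "set_integrable lebesgue {0..t0} v2"
    using iI unfolding set_integrable_def by (subst (asm) integrable_restrict_space) auto
  fix s assume s: "s \<in> {0..t0}"
  have "set_integrable lebesgue {0..s} v2"
    by (rule set_integrable_subset[OF si]) (use s in auto)
  then show "(LINT \<tau>:{0..s}|lebesgue. v2 \<tau>) = integral {0..s} v2"
    by (rule set_lebesgue_integral_eq_integral)
qed

lemma cont_LINT:
  fixes f :: "real \<Rightarrow> complex^'m"
  assumes "continuous_on {a..b} f"
  shows "(LINT \<tau>:{a..b}|lebesgue. f \<tau>) = integral {a..b} f"
  by (rule set_lebesgue_integral_eq_integral(2)[OF absolutely_integrable_continuous_real[OF assms]])

lemma zext_deriv:
  fixes v v1 :: "real \<Rightarrow> complex^'m"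
  assumes c1: "continuous_on {0..t0} v1" and v10: "v1 0 = 0" and t0: "0 \<le> t0" and K: "0 \<le> K"
    and vint: "\<And>u. u \<in> {0..t0} \<Longrightarrow> v u = integral {0..u} v1"
  shows "continuous_on {-K..t0} (zext t0 v1)"
    and "\<And>u. u \<in> {-K..t0} \<Longrightarrow> (zext t0 v has_vector_derivative zext t0 v1 u) (at u within {-K..t0})"
proof -
  have eq: "zext t0 v1 u = v1 (max 0 u)" if "u \<in> {-K..t0}" for u
    using that v10 by (auto simp: zext_def max_def)
  have "continuous_on {-K..t0} (\<lambda>u. v1 (max 0 u))"
    by (rule continuous_on_compose2[OF c1]) (auto intro!: continuous_intros simp: t0)
  then show C: "continuous_on {-K..t0} (zext t0 v1)"
    using eq by (metis (mono_tags, lifting) continuous_on_cong)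
  have rep: "zext t0 v u = integral {-K..u} (zext t0 v1)" if u: "u \<in> {-K..t0}" for u
  proof (cases "u < 0")
    case True
    have "integral {-K..u} (zext t0 v1) = integral {-K..u} (\<lambda>_. 0)"
      by (rule integral_cong) (use True in \<open>auto simp: zext_def\<close>)
    then show ?thesis using True by (simp add: zext_def)
  next
    case False
    have ii: "zext t0 v1 integrable_on {-K..u}"
      by (rule integrable_continuous_interval, rule continuous_on_subset[OF C]) (use u in auto)
    have "integral {-K..u} (zext t0 v1) = integral {-K..0} (zext t0 v1) + integral {0..u} (zext t0 v1)"
      using Henstock_Kurzweil_Integration.integral_combine[of "-K" 0 u "zext t0 v1"] ii False K by simp
    also have "integral {-K..0} (zext t0 v1) = integral {-K..0} (\<lambda>_. 0)"
      by (rule integral_cong) (use v10 in \<open>auto simp: zext_def\<close>)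
    also have "integral {0..u} (zext t0 v1) = integral {0..u} v1"
      by (rule integral_cong) (use u in \<open>auto simp: zext_def\<close>)
    finally have "integral {-K..u} (zext t0 v1) = integral {0..u} v1" by simp
    then show ?thesis using u False vint[of u] unfolding zext_def by simp
  qed
  fix u assume u: "u \<in> {-K..t0}"
  show "(zext t0 v has_vector_derivative zext t0 v1 u) (at u within {-K..t0})"
    by (rule has_vector_derivative_transform[OF u rep integral_has_vector_derivative[OF C u]])
qed

lemma lin_bound:
  fixes V V1 :: "real \<Rightarrow> complex^'m"
  assumes C: "continuous_on {a..b} V1"
    and D: "\<And>u. u \<in> {a..b} \<Longrightarrow> (V has_vector_derivative V1 u) (at u within {a..b})"
    and e: "e > 0"
  shows "\<exists>d>0. \<forall>u\<in>{a..b}. \<forall>u'\<in>{a..b}. \<bar>u' - u\<bar> < d \<longrightarrow>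
            norm (V u' - V u - (u' - u) *\<^sub>R V1 u) \<le> \<bar>u' - u\<bar> * e"
proof -
  have "uniformly_continuous_on {a..b} V1"
    by (rule compact_uniformly_continuous[OF C]) simp
  then obtain d where d: "d > 0" and dd: "\<And>x x'. x \<in> {a..b} \<Longrightarrow> x' \<in> {a..b} \<Longrightarrow> dist x' x < d \<Longrightarrow> dist (V1 x') (V1 x) < e"
    unfolding uniformly_continuous_on_def using e by metis
  show ?thesis
  proof (intro exI[of _ d] conjI ballI impI d)
    fix u u' assume u: "u \<in> {a..b}" and u': "u' \<in> {a..b}" and uu: "\<bar>u' - u\<bar> < d"
    let ?S = "closed_segment u u'"
    have sub: "?S \<subseteq> {a..b}"
      using u u' by (auto simp: closed_segment_eq_real_ivl split: if_splits)
    have DS: "\<And>x. x \<in> ?S \<Longrightarrow> (V has_vector_derivative V1 x) (at x within ?S)"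
      using D sub by (meson has_vector_derivative_within_subset subsetD)
    have BS: "norm (V1 x - V1 u) \<le> e" if x: "x \<in> ?S" for x
    proof -
      have "dist x u \<le> dist u' u"
        using x by (metis dist_commute dist_in_closed_segment)
      then have "dist (V1 x) (V1 u) < e" using uu sub x u by (intro dd) (auto simp: dist_real_def)
      then show "norm (V1 x - V1 u) \<le> e" by (simp add: dist_norm)
    qed
    have "norm (V u' - V u - (u' - u) *\<^sub>R V1 u) \<le> norm (u' - u) * e"
      using vector_differentiable_bound_linearization[OF DS order_refl BS] by simp
    then show "norm (V u' - V u - (u' - u) *\<^sub>R V1 u) \<le> \<bar>u' - u\<bar> * e" by simp
  qed
qed

lemma vec_has_vector_derivative:
  fixes f :: "real \<Rightarrow> 'a::real_normed_vector^'n"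
  assumes "\<And>j. ((\<lambda>s. f s $ j) has_vector_derivative f' $ j) (at x within S)"
  shows "(f has_vector_derivative f') (at x within S)"
proof -
  have "((\<lambda>y. (1 / norm (y - x)) *\<^sub>R ((\<lambda>s. f s $ j) y - ((\<lambda>s. f s $ j) x + (y - x) *\<^sub>R f' $ j))) \<longlongrightarrow> 0) (at x within S)" for j
    using assms[of j] unfolding has_vector_derivative_def has_derivative_within by simp
  then have "((\<lambda>y. (1 / norm (y - x)) *\<^sub>R (f y - (f x + (y - x) *\<^sub>R f'))) \<longlongrightarrow> 0) (at x within S)"
    by (intro vec_tendstoI) simp
  then show ?thesis
    unfolding has_vector_derivative_def has_derivative_within
    by (simp add: bounded_linear_scaleR_left)
qed



lemma aux_lin: fixes A B C :: complex
  assumes "k \<noteq> 0"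
  shows "(\<sigma> *\<^sub>R A - \<sigma> *\<^sub>R B) /\<^sub>R k - \<sigma> *\<^sub>R C = (\<sigma> / k) *\<^sub>R (A - B - k *\<^sub>R C)"
  using assms by (simp add: scaleR_diff_right scaleR_scaleR divide_inverse mult.commute)

lemma norm_vec_le_sum: "norm (x::'a::real_normed_vector^'n) \<le> (\<Sum>i\<in>UNIV. norm (x$i))"
  by (simp add: norm_vec_def L2_set_le_sum)

theorem lemma2p10:
  fixes p :: real and c :: "'m::finite \<Rightarrow> real" and t0 :: real
    and v :: "real \<Rightarrow> complex^'m"
  assumes "p \<ge> 1"
    and "\<And>j. c j \<noteq> 0"
    and "0 < t0"
    and "t0 \<le> 1 / Max (range (\<lambda>j. \<bar>c j\<bar>))"
    and "W2p0 p t0 v"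
  shows "classical_solution p c t0
           (\<lambda>t s. \<chi> j. if c j > 0 then zext t0 v (t - (1 - s) / \<bar>c j\<bar>) $ j
                         else - (zext t0 v (t - s / \<bar>c j\<bar>) $ j))
           v"
proof -
  note p1 = assms(1) and c0 = assms(2) and t0p = assms(3) and t0M = assms(4)
  have p: "p > 0" using p1 by simp
  obtain v1 v2 where Lv2: "in_Lp p {0..t0} v2" and v0: "v 0 = 0" and v10: "v1 0 = 0"
    and vrep: "\<And>s. s \<in> {0..t0} \<Longrightarrow> v s = v 0 + (LINT \<tau>:{0..s}|lebesgue. v1 \<tau>)"
    and v1rep: "\<And>s. s \<in> {0..t0} \<Longrightarrow> v1 s = v1 0 + (LINT \<tau>:{0..s}|lebesgue. v2 \<tau>)"
    using assms(5) unfolding W2p0_def by blast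
  have v1i: "v1 s = integral {0..s} v2" if "s \<in> {0..t0}" for s
    using v1rep[OF that] v2_props(2)[OF p1 Lv2 that] v10 by simp
  have cv1: "continuous_on {0..t0} v1"
    using indefinite_integral_continuous_1[OF v2_props(1)[OF p1 Lv2]] v1i
    by (metis (mono_tags, lifting) continuous_on_cong)
  have vi: "v u = integral {0..u} v1" if u: "u \<in> {0..t0}" for u
  proof -
    have "continuous_on {0..u} v1" by (rule continuous_on_subset[OF cv1]) (use u in auto)
    then show ?thesis using vrep[OF u] v0 cont_LINT by simp
  qed
  define K where "K = (\<Sum>j\<in>UNIV. 1 / \<bar>c j\<bar>)"
  have cK: "1 / \<bar>c j\<bar> \<le> K" for j
    unfolding K_def by (rule member_le_sum) auto
  have K0: "0 \<le> K" using cK[of undefined] by (smt (verit) divide_nonneg_nonneg abs_ge_zero)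
  define V where "V = zext t0 v"
  define V1 where "V1 = zext t0 v1"
  have CV1: "continuous_on {-K..t0} V1"
    unfolding V1_def by (rule zext_deriv(1)[OF cv1 v10 _ K0 vi]) (use t0p in auto)
  have DV: "\<And>u. u \<in> {-K..t0} \<Longrightarrow> (V has_vector_derivative V1 u) (at u within {-K..t0})"
    unfolding V_def V1_def by (rule zext_deriv(2)[OF cv1 v10 _ K0 vi]) (use t0p in auto)
  have CV: "continuous_on {-K..t0} V"
    using DV by (rule continuous_on_vector_derivative)
  define sg where "sg j = (if c j > 0 then 1 else -1::real)" for j
  define a where "a j s = (if c j > 0 then (1 - s) / \<bar>c j\<bar> else s / \<bar>c j\<bar>)" for j and s::real
  define ad where "ad j = (if c j > 0 then 1 / \<bar>c j\<bar> else - 1 / \<bar>c j\<bar>)" for j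
  define X where "X t s = (\<chi> j. sg j *\<^sub>R (V (t - a j s) $ j))" for t s
  define Xd where "Xd t s = (\<chi> j. sg j *\<^sub>R (V1 (t - a j s) $ j))" for t s
  define G where "G t s = (\<chi> j. (1 / \<bar>c j\<bar>) *\<^sub>R (V1 (t - a j s) $ j))" for t s
  have Xeq: "(\<lambda>t s. \<chi> j. if c j > 0 then zext t0 v (t - (1 - s) / \<bar>c j\<bar>) $ j
                         else - (zext t0 v (t - s / \<bar>c j\<bar>) $ j)) = X"
    by (auto simp: fun_eq_iff vec_eq_iff X_def sg_def a_def V_def)
  have CG: "Cmul c (G t s) = Xd t s" for t s
    using c0 by (auto simp: vec_eq_iff Cmul_def G_def Xd_def sg_def scaleR_conv_of_real)
  have abnd: "0 \<le> a j s \<and> a j s \<le> 1 / \<bar>c j\<bar>" if "s \<in> {0..1}" for s j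
    using that c0[of j] by (auto simp: a_def intro: divide_right_mono divide_nonneg_neg divide_right_mono_neg)
  have rng: "t - a j s \<in> {-K..t0}" if "t \<in> {0..t0}" "s \<in> {0..1}" for t s j
    using abnd[OF that(2), of j] cK[of j] that(1) by auto
  have Vneg: "V u = 0" if "u \<le> 0" for u
    using that v0 by (auto simp: V_def zext_def)
  have contF: "continuous_on {0..1} (\<lambda>s. \<chi> j. h j *\<^sub>R (F (t - a j s) $ j))"
    if F: "continuous_on {-K..t0} F" and t: "t \<in> {0..t0}" for F :: "real \<Rightarrow> complex^'m" and h t
  proof -
    have "continuous_on {0..1} (\<lambda>s. F (t - a j s))" for j
    proof (rule continuous_on_compose2[OF F])
      show "continuous_on {0..1} (\<lambda>s. t - a j s)"
        using c0[of j] by (cases "c j > 0") (auto simp: a_def intro!: continuous_intros)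
      show "(\<lambda>s. t - a j s) ` {0..1} \<subseteq> {-K..t0}" using rng[OF t] by auto
    qed
    then show ?thesis
      by (intro continuous_on_vec_lambda continuous_on_scaleR continuous_on_const continuous_on_component)
  qed
  have derX: "((\<lambda>s. X t s) has_vector_derivative G t s) (at s within {0..1})"
    if t: "t \<in> {0..t0}" and s: "s \<in> {0..1}" for t s
  proof (rule vec_has_vector_derivative)
    fix j
    have hA: "((\<lambda>s. t - a j s) has_vector_derivative ad j) (at s within {0..1})"
      using c0[of j]
      by (cases "c j > 0") (auto simp: a_def ad_def has_real_derivative_iff_has_vector_derivative[symmetric]
          intro!: derivative_eq_intros)
    have hV: "(V has_vector_derivative V1 (t - a j s)) (at (t - a j s) within (\<lambda>s. t - a j s) ` {0..1})"
      by (rule has_vector_derivative_within_subset[OF DV[OF rng[OF t s]]]) (use rng[OF t] in auto)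
    have "((V \<circ> (\<lambda>s. t - a j s)) has_vector_derivative (ad j *\<^sub>R V1 (t - a j s))) (at s within {0..1})"
      by (rule vector_diff_chain_within[OF hA hV])
    then have "((\<lambda>s. V (t - a j s)) has_vector_derivative (ad j *\<^sub>R V1 (t - a j s))) (at s within {0..1})"
      by (simp add: o_def)
    then have "((\<lambda>s. V (t - a j s) $ j) has_vector_derivative (ad j *\<^sub>R V1 (t - a j s)) $ j) (at s within {0..1})"
      by (rule bounded_linear.has_vector_derivative[OF bounded_linear_vec_nth])
    then have "((\<lambda>s. sg j *\<^sub>R (V (t - a j s) $ j)) has_vector_derivative sg j *\<^sub>R ((ad j *\<^sub>R V1 (t - a j s)) $ j)) (at s within {0..1})"
      by (rule bounded_linear.has_vector_derivative[OF bounded_linear_scaleR_right])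
    moreover have "sg j *\<^sub>R ((ad j *\<^sub>R V1 (t - a j s)) $ j) = G t s $ j"
      using c0[of j] by (auto simp: sg_def ad_def G_def)
    ultimately show "((\<lambda>s. X t s $ j) has_vector_derivative G t s $ j) (at s within {0..1})"
      by (simp add: X_def)
  qed
  have ftc: "X t s = X t 0 + (LINT \<tau>:{0..s}|lebesgue. G t \<tau>)"
    if t: "t \<in> {0..t0}" and s: "s \<in> {0..1}" for t s
  proof -
    have "(G t has_integral (X t s - X t 0)) {0..s}"
    proof (rule fundamental_theorem_of_calculus)
      show "0 \<le> s" using s by simp
      fix x assume x: "x \<in> {0..s}"
      then have "x \<in> {0..1}" using s by auto
      from derX[OF t this] show "(X t has_vector_derivative G t x) (at x within {0..s})"
        by (rule has_vector_derivative_within_subset) (use s in auto)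
    qed
    moreover have contG: "continuous_on {0..1} (G t)"
      using contF[OF CV1 t, of "\<lambda>j. 1 / \<bar>c j\<bar>"] by (simp add: G_def[abs_def])
    have "(LINT \<tau>:{0..s}|lebesgue. G t \<tau>) = integral {0..s} (G t)"
      by (rule cont_LINT, rule continuous_on_subset[OF contG]) (use s in auto)
    ultimately show ?thesis by (simp add: integral_unique)
  qed
  have tdiff: "((\<lambda>\<tau>. Lp_norm p {0..1} (\<lambda>s. (X \<tau> s - X t s) /\<^sub>R (\<tau> - t) - Xd t s)) \<longlongrightarrow> 0)
       (at t within {0..t0})" if t: "t \<in> {0..t0}" for t
  proof (rule Lp_tendsto[OF p])
    fix e :: real assume e: "e > 0"
    define e' where "e' = e / real CARD('m)"
    have e': "e' > 0" using e by (simp add: e'_def)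
    obtain d where d: "d > 0" and dd: "\<forall>u\<in>{-K..t0}. \<forall>u'\<in>{-K..t0}. \<bar>u' - u\<bar> < d \<longrightarrow>
        norm (V u' - V u - (u' - u) *\<^sub>R V1 u) \<le> \<bar>u' - u\<bar> * e'"
      using lin_bound[OF CV1 DV e'] by blast
    show "eventually (\<lambda>\<tau>. \<forall>s\<in>{0..1}. norm ((X \<tau> s - X t s) /\<^sub>R (\<tau> - t) - Xd t s) \<le> e) (at t within {0..t0})"
      unfolding eventually_at
    proof (intro exI[of _ d] conjI d ballI impI)
      fix \<tau> s :: real assume \<tau>: "\<tau> \<in> {0..t0}" and \<tau>t: "\<tau> \<noteq> t \<and> dist \<tau> t < d" and s: "s \<in> {0..1}"
      have comp: "norm (((X \<tau> s - X t s) /\<^sub>R (\<tau> - t) - Xd t s) $ j) \<le> e'" for j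
      proof -
        define u where "u = t - a j s"
        define u' where "u' = \<tau> - a j s"
        have uu: "u' - u = \<tau> - t" by (simp add: u_def u'_def)
        have ne: "\<tau> - t \<noteq> 0" using \<tau>t by simp
        have eq: "((X \<tau> s - X t s) /\<^sub>R (\<tau> - t) - Xd t s) $ j
            = (sg j / (\<tau> - t)) *\<^sub>R ((V u' - V u - (u' - u) *\<^sub>R V1 u) $ j)"
          unfolding uu using aux_lin[OF ne, of "sg j" "V u' $ j" "V u $ j" "V1 u $ j"]
          by (simp add: X_def Xd_def u_def u'_def)
        have "norm (V u' - V u - (u' - u) *\<^sub>R V1 u) \<le> \<bar>u' - u\<bar> * e'"
        proof -
          have "u \<in> {-K..t0}" "u' \<in> {-K..t0}" using rng[OF t s] rng[OF \<tau> s] by (auto simp: u_def u'_def)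
          moreover have "\<bar>u' - u\<bar> < d" using uu \<tau>t by (simp add: dist_real_def)
          ultimately show ?thesis using dd by blast
        qed
        then have nv: "norm (V u' - V u - (\<tau> - t) *\<^sub>R V1 u) \<le> \<bar>\<tau> - t\<bar> * e'"
          by (simp only: uu)
        have nb: "norm ((V u' - V u - (u' - u) *\<^sub>R V1 u) $ j) \<le> \<bar>\<tau> - t\<bar> * e'"
          unfolding uu by (rule order_trans[OF Finite_Cartesian_Product.norm_nth_le nv])
        have "norm (((X \<tau> s - X t s) /\<^sub>R (\<tau> - t) - Xd t s) $ j)
            = norm ((V u' - V u - (u' - u) *\<^sub>R V1 u) $ j) / \<bar>\<tau> - t\<bar>"
          unfolding eq by (simp add: sg_def)
        also have "\<dots> \<le> (\<bar>\<tau> - t\<bar> * e') / \<bar>\<tau> - t\<bar>"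
          by (rule divide_right_mono[OF nb]) simp
        also have "\<dots> = e'" using ne by simp
        finally show ?thesis .
      qed
      have "norm ((X \<tau> s - X t s) /\<^sub>R (\<tau> - t) - Xd t s)
          \<le> (\<Sum>j\<in>UNIV. norm (((X \<tau> s - X t s) /\<^sub>R (\<tau> - t) - Xd t s) $ j))"
        by (rule norm_vec_le_sum)
      also have "\<dots> \<le> (\<Sum>j\<in>(UNIV::'m set). e')" by (rule sum_mono) (rule comp)
      also have "\<dots> = e" by (simp add: e'_def)
      finally show "norm ((X \<tau> s - X t s) /\<^sub>R (\<tau> - t) - Xd t s) \<le> e" .
    qed
  qed
  have Xdcont: "((\<lambda>\<tau>. Lp_norm p {0..1} (\<lambda>s. Xd \<tau> s - Xd t s)) \<longlongrightarrow> 0)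
       (at t within {0..t0})" if t: "t \<in> {0..t0}" for t
  proof (rule Lp_tendsto[OF p])
    fix e :: real assume e: "e > 0"
    define e' where "e' = e / real CARD('m)"
    have e': "e' > 0" using e by (simp add: e'_def)
    have "uniformly_continuous_on {-K..t0} V1"
      by (rule compact_uniformly_continuous[OF CV1]) simp
    then obtain d where d: "d > 0" and dd: "\<And>x x'. x \<in> {-K..t0} \<Longrightarrow> x' \<in> {-K..t0} \<Longrightarrow> dist x' x < d \<Longrightarrow> dist (V1 x') (V1 x) < e'"
      unfolding uniformly_continuous_on_def using e' by metis
    show "eventually (\<lambda>\<tau>. \<forall>s\<in>{0..1}. norm (Xd \<tau> s - Xd t s) \<le> e) (at t within {0..t0})"
      unfolding eventually_at
    proof (intro exI[of _ d] conjI d ballI impI)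
      fix \<tau> s :: real assume \<tau>: "\<tau> \<in> {0..t0}" and \<tau>t: "\<tau> \<noteq> t \<and> dist \<tau> t < d" and s: "s \<in> {0..1}"
      have comp: "norm ((Xd \<tau> s - Xd t s) $ j) \<le> e'" for j
      proof -
        define u where "u = t - a j s"
        define u' where "u' = \<tau> - a j s"
        have "dist (V1 u') (V1 u) < e'"
          using dd[of u u'] rng[OF t s] rng[OF \<tau> s] \<tau>t unfolding u_def u'_def
          by (auto simp: dist_real_def)
        then have nb: "norm ((V1 u' - V1 u) $ j) \<le> e'"
          by (metis dist_norm Finite_Cartesian_Product.norm_nth_le order_trans less_imp_le)
        have "(Xd \<tau> s - Xd t s) $ j = sg j *\<^sub>R ((V1 u' - V1 u) $ j)"
          by (simp add: Xd_def u_def u'_def algebra_simps)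
        then show ?thesis using nb by (simp add: sg_def)
      qed
      have "norm (Xd \<tau> s - Xd t s) \<le> (\<Sum>j\<in>UNIV. norm ((Xd \<tau> s - Xd t s) $ j))"
        by (rule norm_vec_le_sum)
      also have "\<dots> \<le> (\<Sum>j\<in>(UNIV::'m set). e')" by (rule sum_mono) (rule comp)
      also have "\<dots> = e" by (simp add: e'_def)
      finally show "norm (Xd \<tau> s - Xd t s) \<le> e" .
    qed
  qed
  have Mpos: "\<bar>c j\<bar> \<le> Max (range (\<lambda>j. \<bar>c j\<bar>))" for j
    by (rule Max_ge) auto
  have tc: "t - 1 / \<bar>c j\<bar> \<le> 0" if t: "t \<in> {0..t0}" for t j
  proof -
    have cp: "0 < \<bar>c j\<bar>" using c0[of j] by simp
    have "0 < Max (range (\<lambda>j. \<bar>c j\<bar>)) * \<bar>c j\<bar>"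
    proof (rule mult_pos_pos)
      show "0 < Max (range (\<lambda>j. \<bar>c j\<bar>))" using Mpos[of j] cp by linarith
    qed (rule cp)
    then have "1 / Max (range (\<lambda>j. \<bar>c j\<bar>)) \<le> 1 / \<bar>c j\<bar>"
      by (intro divide_left_mono[OF Mpos]) auto
    then show ?thesis using t t0M by auto
  qed
  have bnd: "X t 1 - X t 0 = v t" if t: "t \<in> {0..t0}" for t
  proof -
    have Vt: "V t = v t" using t by (simp add: V_def zext_def)
    show ?thesis
    proof (rule vec_eq_iff[THEN iffD2], rule allI)
      fix j
      have z: "V (t - 1 / \<bar>c j\<bar>) $ j = 0" using Vneg[OF tc[OF t, of j]] by simp
      show "(X t 1 - X t 0) $ j = v t $ j"
        using z by (cases "c j > 0") (simp_all add: X_def a_def sg_def Vt)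
    qed
  qed
  have X0: "Lp_norm p {0..1} (X 0) = 0"
  proof (rule Lp_zero[OF p])
    fix s :: real assume s: "s \<in> {0..1}"
    show "X 0 s = 0"
      using abnd[OF s] Vneg by (simp add: vec_eq_iff X_def)
  qed
  have Xin: "\<forall>t\<in>{0..t0}. in_Lp p {0..1} (X t)"
  proof
    fix t assume t: "t \<in> {0..t0}"
    show "in_Lp p {0..1} (X t)"
      using Lp_cont[OF contF[OF CV t, of sg] p] by (simp add: X_def[abs_def])
  qed
  show ?thesis
    unfolding Xeq classical_solution_def
  proof (rule conjI[OF Xin], rule exI[of _ Xd], rule exI[of _ X], rule exI[of _ G], intro conjI ballI)
    fix t assume t: "t \<in> {0..t0}"
    show "in_Lp p {0..1} (Xd t)"
      using Lp_cont[OF contF[OF CV1 t, of sg] p] by (simp add: Xd_def[abs_def])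
    show "((\<lambda>\<tau>. Lp_norm p {0..1} (\<lambda>s. (X \<tau> s - X t s) /\<^sub>R (\<tau> - t) - Xd t s)) \<longlongrightarrow> 0)
       (at t within {0..t0})" by (rule tdiff[OF t])
    show "((\<lambda>\<tau>. Lp_norm p {0..1} (\<lambda>s. Xd \<tau> s - Xd t s)) \<longlongrightarrow> 0) (at t within {0..t0})"
      by (rule Xdcont[OF t])
    show "((\<lambda>\<tau>. Lp_norm p {0..1} (\<lambda>s. Cmul c (G \<tau> s) - Cmul c (G t s))) \<longlongrightarrow> 0) (at t within {0..t0})"
      unfolding CG by (rule Xdcont[OF t])
    show "Lp_norm p {0..1} (\<lambda>s. Xd t s - Cmul c (G t s)) = 0"
      unfolding CG by (rule Lp_zero[OF p]) simp
    show "X t 1 - X t 0 = v t" by (rule bnd[OF t])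
    show "W1p_rep p 0 1 (X t) (X t) (G t)"
      unfolding W1p_rep_def
    proof (intro conjI ballI)
      show "in_Lp p {0..1} (X t)"
        using Lp_cont[OF contF[OF CV t, of sg] p] by (simp add: X_def[abs_def])
      show "in_Lp p {0..1} (G t)"
        using Lp_cont[OF contF[OF CV1 t, of "\<lambda>j. 1 / \<bar>c j\<bar>"] p] by (simp add: G_def[abs_def])
      show "AE s in lebesgue_on {0..1}. X t s = X t s" by simp
      fix s :: real assume s: "s \<in> {0..1}"
      show "X t s = X t 0 + (LINT \<tau>:{0..s}|lebesgue. G t \<tau>)" by (rule ftc[OF t s])
    qed
  next
    show "Lp_norm p {0..1} (X 0) = 0" by (rule X0)
  qed
qed


end
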